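(* Let $h(p):=-s_\phi(p,p)$, $C:=\mathbb{E}[Q\mid S]$, and let $S_B$ be a binned version of $S$. Then $$\underbrace{\mathbb{E}[\mathrm{Var}_h(Q\mid S_B)]}_{\mathrm{GL}(S_B)}=\underbrace{\mathbb{E}[\mathrm{Var}_h(Q\mid S)]}_{\mathrm{GL}(S)}+\underbrace{\mathbb{E}[\mathrm{Var}_h(C\mid S_B)]}_{\mathrm{GL}_{\mathrm{induced}}(S,S_B)}.$$ Moreover, if the scoring rule $\phi$ is proper, then $\mathrm{GL}_{\mathrm{induced}}(S,S_B)\ge0$.
   Context: Let $(X,Y)$ be jointly distributed with $X\in\mathcal{X}$ and $Y\in\{e_1,\dots,e_K\}$ (one-hot vectors of $\mathbb{R}^K$); $\Delta_K$ is the probability simplex; $Q\in\Delta_K$ with $Q_k:=P(Y=e_k\mid X)$; $S=f(X)\in\Delta_K$ for a classifier $f$. A scoring rule is $\phi:\Delta_K\times\{e_1,\dots,e_K\}\to\mathbb{R}$, with $s_\phi(P,q):=\sum_k\phi(P,e_k)q_k$ and $d_\phi(P,q):=s_\phi(P,q)-s_\phi(q,q)$; $\phi$ is proper if $d_\phi\ge0$. For $f:\mathbb{R}^d\to\mathbb{R}$, $\mathrm{Var}_f(U\mid V):=\mathbb{E}[f(U)\mid V]-f(\mathbb{E}[U\mid V])$. Binned classifier: given a partition $\{\mathcal{B}_j\}_{1\le j\le J}$ of $\Delta_K$, $S_B$ is the random variable equal to $\mathbb{E}[S\mid S\in\mathcal{B}_j]$ on the event $\{S\in\mathcal{B}_j\}$.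 All required expectations are assumed to exist. *)

theory Defs
  imports "HOL-Probability.Probability"
begin

text \<open>Probability simplex in R^K (K = CARD('k)); one-hot vectors are axis k 1.\<close>
definition prob_simplex :: "(real^'k::finite) set" where
  "prob_simplex = {p. (\<forall>k. 0 \<le> p$k) \<and> (\<Sum>k\<in>UNIV. p$k) = 1}"

definition s_phi :: "(real^'k::finite \<Rightarrow> real^'k \<Rightarrow> real) \<Rightarrow> real^'k \<Rightarrow> real^'k \<Rightarrow> real" where
  "s_phi \<phi> P q = (\<Sum>k\<in>UNIV. \<phi> P (axis k 1) * q$k)"

definition d_phi :: "(real^'k::finite \<Rightarrow> real^'k \<Rightarrow> real) \<Rightarrow> real^'k \<Rightarrow> real^'k \<Rightarrow> real" where
  "d_phi \<phi> P q = s_phi \<phi> P q - s_phi \<phi> q q"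

definition proper_scoring :: "(real^'k::finite \<Rightarrow> real^'k \<Rightarrow> real) \<Rightarrow> bool" where
  "proper_scoring \<phi> \<longleftrightarrow> (\<forall>P\<in>prob_simplex. \<forall>q\<in>prob_simplex. d_phi \<phi> P q \<ge> 0)"

definition gen_alg :: "'a measure \<Rightarrow> ('a \<Rightarrow> 'b) \<Rightarrow> 'b measure \<Rightarrow> 'a measure" where
  "gen_alg M V N = vimage_algebra (space M) V N"

definition cexp :: "'a measure \<Rightarrow> ('a \<Rightarrow> 'b) \<Rightarrow> 'b measure \<Rightarrow> ('a \<Rightarrow> real) \<Rightarrow> 'a \<Rightarrow> real" where
  "cexp M V N f = real_cond_exp M (gen_alg M V N) f"

definition cexp_vec :: "'a measure \<Rightarrow> ('a \<Rightarrow> 'b) \<Rightarrow> 'b measure \<Rightarrow> ('a \<Rightarrow> real^'k::finite) \<Rightarrow> 'a \<Rightarrow> real^'k" where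
  "cexp_vec M V N U = (\<lambda>\<omega>. \<chi> k. cexp M V N (\<lambda>\<omega>'. U \<omega>' $ k) \<omega>)"

definition var_h :: "'a measure \<Rightarrow> (real^'k::finite \<Rightarrow> real) \<Rightarrow> ('a \<Rightarrow> 'b) \<Rightarrow> 'b measure \<Rightarrow> ('a \<Rightarrow> real^'k) \<Rightarrow> 'a \<Rightarrow> real" where
  "var_h M h V N U = (\<lambda>\<omega>. cexp M V N (\<lambda>\<omega>'. h (U \<omega>')) \<omega> - h (cexp_vec M V N U \<omega>))"

definition bin_mean :: "'a measure \<Rightarrow> ('a \<Rightarrow> real^'k::finite) \<Rightarrow> 'a set \<Rightarrow> real^'k" where
  "bin_mean M S A = (1 / measure M A) *\<^sub>R (\<integral>\<omega>\<in>A. S \<omega> \<partial>M)"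

definition binned :: "'a measure \<Rightarrow> ('a \<Rightarrow> real^'k::finite) \<Rightarrow> (real^'k) set set \<Rightarrow> 'a \<Rightarrow> real^'k" where
  "binned M S \<B> = (\<lambda>\<omega>. \<Sum>B\<in>\<B>. indicator (S -` B \<inter> space M) \<omega> *\<^sub>R bin_mean M S (S -` B \<inter> space M))"

end

theory Submission
  imports Defs
begin
lemma sub_gen:
  assumes "prob_space M" "V \<in> measurable M N"
  shows "sigma_finite_subalgebra M (gen_alg M V N)"
proof -
  have sa: "subalgebra M (gen_alg M V N)" unfolding subalgebra_def gen_alg_def
    using sets_vimage_algebra2[of V "space M" N] measurable_space[OF assms(2)] measurable_sets[OF assms(2)] by auto
  have "finite_measure_subalgebra M (gen_alg M V N)"
    using sa assms(1) unfolding finite_measure_subalgebra_def finite_measure_subalgebra_axioms_def prob_space_def by blast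
  then show ?thesis by (rule finite_measure_subalgebra_is_sigma_finite)
qed

lemma cexp_vec_simplex:
  fixes U :: "'a \<Rightarrow> real^'k::finite"
  assumes "prob_space M" "V \<in> measurable M N" "\<And>k. integrable M (\<lambda>\<omega>. U \<omega> $ k)"
    "AE \<omega> in M. U \<omega> \<in> prob_simplex"
  shows "AE \<omega> in M. cexp_vec M V N U \<omega> \<in> prob_simplex"
proof -
  interpret sigma_finite_subalgebra M "gen_alg M V N" by (rule sub_gen[OF assms(1,2)])
  interpret P: prob_space M by fact
  let ?F = "gen_alg M V N"
  have pos: "AE \<omega> in M. \<forall>k\<in>UNIV. real_cond_exp M ?F (\<lambda>\<omega>. U \<omega> $ k) \<omega> \<ge> 0"
  proof (rule AE_finite_allI, simp)
    fix k
    show "AE \<omega> in M. real_cond_exp M ?F (\<lambda>\<omega>. U \<omega> $ k) \<omega> \<ge> 0"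
      apply (rule real_cond_exp_pos)
      using assms(4) apply (rule AE_mp) apply (simp add: prob_simplex_def)
      using assms(3) by auto
  qed
  have s1: "AE \<omega> in M. real_cond_exp M ?F (\<lambda>\<omega>. \<Sum>k\<in>UNIV. U \<omega> $ k) \<omega> = (\<Sum>k\<in>UNIV. real_cond_exp M ?F (\<lambda>\<omega>. U \<omega> $ k) \<omega>)"
    by (rule real_cond_exp_sum) (rule assms(3))
  have s2: "AE \<omega> in M. real_cond_exp M ?F (\<lambda>\<omega>. \<Sum>k\<in>UNIV. U \<omega> $ k) \<omega> = real_cond_exp M ?F (\<lambda>\<omega>. 1) \<omega>"
    apply (rule real_cond_exp_cong)
    using assms(4) apply (rule AE_mp) apply (simp add: prob_simplex_def)
    using assms(3) by auto
  have s3: "AE \<omega> in M. real_cond_exp M ?F (\<lambda>\<omega>. 1) \<omega> = 1"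
    by (rule real_cond_exp_F_meas) auto
  show ?thesis using pos s1 s2 s3
    by eventually_elim (simp add: prob_simplex_def cexp_vec_def cexp_def)
qed

lemma fin_meas:
  fixes SB :: "'a \<Rightarrow> real^'k::finite" and \<psi> :: "real^'k \<Rightarrow> real"
  assumes "finite (SB ` space M)"
  shows "(\<lambda>\<omega>. \<psi> (SB \<omega>)) \<in> borel_measurable (gen_alg M SB borel)"
proof (rule measurableI)
  fix A :: "real set" assume "A \<in> sets borel"
  let ?T = "{v \<in> SB ` space M. \<psi> v \<in> A}"
  have "finite ?T" using assms by simp
  then have "?T \<in> sets borel" by (simp add: borel_closed finite_imp_closed)
  then have "SB -` ?T \<inter> space M \<in> sets (gen_alg M SB borel)"
    unfolding gen_alg_def by (rule in_vimage_algebra)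
  moreover have "SB -` ?T \<inter> space M = (\<lambda>\<omega>. \<psi> (SB \<omega>)) -` A \<inter> space (gen_alg M SB borel)"
    by (auto simp: gen_alg_def)
  ultimately show "(\<lambda>\<omega>. \<psi> (SB \<omega>)) -` A \<inter> space (gen_alg M SB borel) \<in> sets (gen_alg M SB borel)" by simp
qed auto

lemma factor:
  fixes SB :: "'a \<Rightarrow> 'b" and g :: "'a \<Rightarrow> real"
  assumes "g \<in> borel_measurable (gen_alg M SB N)" "\<omega> \<in> space M" "\<omega>' \<in> space M"
    "SB \<omega> = SB \<omega>'" "SB \<in> space M \<rightarrow> space N"
  shows "g \<omega> = g \<omega>'"
proof -
  have "g -` {g \<omega>} \<inter> space (gen_alg M SB N) \<in> sets (gen_alg M SB N)"
    using assms(1) by (rule measurable_sets) simp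
  then obtain A where "g -` {g \<omega>} \<inter> space M = SB -` A \<inter> space M"
    using sets_vimage_algebra2[OF assms(5)] unfolding gen_alg_def by auto
  then have "\<omega> \<in> SB -` A \<inter> space M" using assms(2) by auto
  then have "\<omega>' \<in> SB -` A \<inter> space M" using assms(3,4) by auto
  then have "\<omega>' \<in> g -` {g \<omega>} \<inter> space M" using \<open>g -` {g \<omega>} \<inter> space M = SB -` A \<inter> space M\<close> by simp
  then show ?thesis by simp
qed

theorem proposition1:
  fixes M :: "'a measure" and MX :: "'x measure" and X :: "'a \<Rightarrow> 'x"
    and Y :: "'a \<Rightarrow> real^'k::finite" and f :: "'x \<Rightarrow> real^'k"
    and \<phi> :: "real^'k \<Rightarrow> real^'k \<Rightarrow> real" and \<B> :: "(real^'k) set set"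
  assumes "prob_space M"
    and "X \<in> measurable M MX"
    and "Y \<in> borel_measurable M"
    and "\<forall>\<omega>\<in>space M. \<exists>k. Y \<omega> = axis k 1"
    and "f \<in> borel_measurable MX"
    and "\<forall>x\<in>space MX. f x \<in> prob_simplex"
    and "finite \<B>" and "partition_on prob_simplex \<B>" and "\<forall>B\<in>\<B>. B \<in> sets borel"
  defines "h \<equiv> (\<lambda>p. - s_phi \<phi> p p)"
    and "Q \<equiv> cexp_vec M X MX Y"
    and "S \<equiv> (\<lambda>\<omega>. f (X \<omega>))"
    and "C \<equiv> cexp_vec M (\<lambda>\<omega>. f (X \<omega>)) borel (cexp_vec M X MX Y)"
    and "SB \<equiv> binned M (\<lambda>\<omega>. f (X \<omega>)) \<B>"
  assumes "integrable M (\<lambda>\<omega>. h (Q \<omega>))"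
    and "integrable M (\<lambda>\<omega>. h (C \<omega>))"
    and "integrable M (\<lambda>\<omega>. h (cexp_vec M SB borel Q \<omega>))"
    and "integrable M (\<lambda>\<omega>. h (cexp_vec M SB borel C \<omega>))"
  shows "((\<integral>\<omega>. var_h M h SB borel Q \<omega> \<partial>M)
           = (\<integral>\<omega>. var_h M h S borel Q \<omega> \<partial>M) + (\<integral>\<omega>. var_h M h SB borel C \<omega> \<partial>M))
         \<and> (proper_scoring \<phi> \<longrightarrow> (\<integral>\<omega>. var_h M h SB borel C \<omega> \<partial>M) \<ge> 0)"
proof -
  interpret P: prob_space M by fact
  note intQ = assms(15) and intC = assms(16) and intE = assms(17) and intD = assms(18)
  define FX where "FX = gen_alg M X MX"
  define FS where "FS = gen_alg M S borel"
  define FB where "FB = gen_alg M SB borel"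
  define m where "m = (\<lambda>B. bin_mean M S (S -` B \<inter> space M))"
  define g where "g = (\<lambda>s. \<Sum>B\<in>\<B>. indicator B s *\<^sub>R m B)"
  have Smeas[measurable]: "S \<in> borel_measurable M"
    unfolding S_def using assms(2,5) by measurable
  have subX: "sigma_finite_subalgebra M FX" unfolding FX_def by (rule sub_gen[OF assms(1,2)])
  have subS: "sigma_finite_subalgebra M FS" unfolding FS_def by (rule sub_gen[OF assms(1) Smeas])
  have SBg: "SB \<omega> = g (S \<omega>)" if "\<omega> \<in> space M" for \<omega>
    using that by (simp add: SB_def binned_def g_def m_def S_def indicator_def)
  have gmeas: "g \<in> borel_measurable borel"
    unfolding g_def using assms(9) by (intro borel_measurable_sum borel_measurable_scaleR borel_measurable_indicator) auto
  have SB_FS: "SB \<in> borel_measurable FS"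
  proof -
    have "(\<lambda>\<omega>. g (S \<omega>)) \<in> borel_measurable FS"
      unfolding FS_def gen_alg_def
      by (rule measurable_compose[OF measurable_vimage_algebra1 gmeas]) simp
    then show ?thesis
      by (rule measurable_cong[THEN iffD1, rotated]) (simp add: SBg FS_def gen_alg_def)
  qed
  have SBmeas[measurable]: "SB \<in> borel_measurable M"
    using measurable_from_subalg[OF sigma_finite_subalgebra.subalg[OF subS] SB_FS] .
  have subB: "sigma_finite_subalgebra M FB" unfolding FB_def by (rule sub_gen[OF assms(1) SBmeas])
  have subSB: "subalgebra FS FB"
    unfolding subalgebra_def
  proof
    show "space FB = space FS" by (simp add: FB_def FS_def gen_alg_def)
    show "sets FB \<subseteq> sets FS"
    proof
      fix A assume "A \<in> sets FB"
      then obtain T where "A = SB -` T \<inter> space M" "T \<in> sets borel"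
        using sets_vimage_algebra2[of SB "space M" borel] unfolding FB_def gen_alg_def by auto
      then show "A \<in> sets FS" using measurable_sets[OF SB_FS, of T] by (simp add: FS_def gen_alg_def)
    qed
  qed
  have finSB: "finite (SB ` space M)"
  proof -
    have "SB ` space M \<subseteq> (\<lambda>T. \<Sum>B\<in>T. m B) ` Pow \<B>"
    proof
      fix v assume "v \<in> SB ` space M"
      then obtain \<omega> where w: "\<omega> \<in> space M" "v = SB \<omega>" by auto
      have "v = (\<Sum>B\<in>\<B>. if S \<omega> \<in> B then m B else 0)"
        using w by (auto simp: SBg g_def indicator_def intro!: sum.cong)
      also have "\<dots> = (\<Sum>B\<in>{B\<in>\<B>. S \<omega> \<in> B}. m B)"
        using assms(7) by (simp add: sum.inter_filter)
      finally show "v \<in> (\<lambda>T. \<Sum>B\<in>T. m B) ` Pow \<B>" by blast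
    qed
    then show ?thesis using assms(7) finite_subset by blast
  qed
  have Yk_int: "integrable M (\<lambda>\<omega>. Y \<omega> $ k)" for k
  proof (rule P.integrable_const_bound[where B=1])
    show "AE \<omega> in M. norm (Y \<omega> $ k) \<le> 1"
      using assms(4) by (intro AE_I2) (auto simp: axis_def)
  next
    have "(\<lambda>v::real^'k. v $ k) \<in> borel_measurable borel"
      by (intro borel_measurable_continuous_onI linear_continuous_on bounded_linear_vec_nth)
    then show "(\<lambda>\<omega>. Y \<omega> $ k) \<in> borel_measurable M"
      using measurable_compose[OF assms(3)] by blast
  qed
  have Qk: "(\<lambda>\<omega>. Q \<omega> $ k) = real_cond_exp M FX (\<lambda>\<omega>. Y \<omega> $ k)" for k
    by (simp add: Q_def cexp_vec_def cexp_def FX_def)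
  have Qk_int: "integrable M (\<lambda>\<omega>. Q \<omega> $ k)" for k
    unfolding Qk using sigma_finite_subalgebra.real_cond_exp_int(1)[OF subX Yk_int] .
  have CQ: "C = cexp_vec M S borel Q" by (simp add: C_def S_def Q_def)
  have Ck: "(\<lambda>\<omega>. C \<omega> $ k) = real_cond_exp M FS (\<lambda>\<omega>. Q \<omega> $ k)" for k
    by (simp add: CQ cexp_vec_def cexp_def FS_def)
  have Ck_int: "integrable M (\<lambda>\<omega>. C \<omega> $ k)" for k
    unfolding Ck using sigma_finite_subalgebra.real_cond_exp_int(1)[OF subS Qk_int] .
  define D where "D = cexp_vec M SB borel C"
  define E where "E = cexp_vec M SB borel Q"
  have Dk: "(\<lambda>\<omega>. D \<omega> $ k) = real_cond_exp M FB (\<lambda>\<omega>. C \<omega> $ k)" for k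
    by (simp add: D_def cexp_vec_def cexp_def FB_def)
  have Ek: "(\<lambda>\<omega>. E \<omega> $ k) = real_cond_exp M FB (\<lambda>\<omega>. Q \<omega> $ k)" for k
    by (simp add: E_def cexp_vec_def cexp_def FB_def)
  have DE: "AE \<omega> in M. D \<omega> = E \<omega>"
  proof -
    have "AE \<omega> in M. \<forall>k\<in>UNIV. D \<omega> $ k = E \<omega> $ k"
    proof (rule AE_finite_allI, simp)
      fix k
      have "AE \<omega> in M. real_cond_exp M FB (real_cond_exp M FS (\<lambda>\<omega>. Q \<omega> $ k)) \<omega> = real_cond_exp M FB (\<lambda>\<omega>. Q \<omega> $ k) \<omega>"
        by (rule sigma_finite_subalgebra.real_cond_exp_nested_subalg[OF subB sigma_finite_subalgebra.subalg[OF subS] subSB Qk_int])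
      then show "AE \<omega> in M. D \<omega> $ k = E \<omega> $ k"
        using fun_cong[OF Dk[of k]] fun_cong[OF Ek[of k]] by (simp add: Ck)
    qed
    then show ?thesis by (simp add: vec_eq_iff)
  qed
  have cexp_int: "(\<integral>\<omega>. cexp M V borel (\<lambda>\<omega>'. h (U \<omega>')) \<omega> \<partial>M) = (\<integral>\<omega>. h (U \<omega>) \<partial>M)"
     "integrable M (cexp M V borel (\<lambda>\<omega>'. h (U \<omega>')))"
    if "V \<in> borel_measurable M" "integrable M (\<lambda>\<omega>. h (U \<omega>))" for V and U :: "'a \<Rightarrow> real^'k"
    unfolding cexp_def
    using sigma_finite_subalgebra.real_cond_exp_int[OF sub_gen[OF assms(1) that(1)] that(2)] by auto
  have eq1: "(\<integral>\<omega>. var_h M h SB borel Q \<omega> \<partial>M) = (\<integral>\<omega>. h (Q \<omega>) \<partial>M) - (\<integral>\<omega>. h (E \<omega>) \<partial>M)"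
    unfolding var_h_def E_def
    by (subst Bochner_Integration.integral_diff) (use cexp_int[OF SBmeas intQ] intE in auto)
  have eq2: "(\<integral>\<omega>. var_h M h S borel Q \<omega> \<partial>M) = (\<integral>\<omega>. h (Q \<omega>) \<partial>M) - (\<integral>\<omega>. h (C \<omega>) \<partial>M)"
    unfolding var_h_def CQ[symmetric]
    by (subst Bochner_Integration.integral_diff) (use cexp_int[OF Smeas intQ] intC in auto)
  have eq3: "(\<integral>\<omega>. var_h M h SB borel C \<omega> \<partial>M) = (\<integral>\<omega>. h (C \<omega>) \<partial>M) - (\<integral>\<omega>. h (D \<omega>) \<partial>M)"
    unfolding var_h_def D_def
    by (subst Bochner_Integration.integral_diff) (use cexp_int[OF SBmeas intC] intD in auto)
  have eqDE: "(\<integral>\<omega>. h (D \<omega>) \<partial>M) = (\<integral>\<omega>. h (E \<omega>) \<partial>M)"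
    apply (rule integral_cong_AE)
    using intD intE DE unfolding D_def E_def by (auto elim: AE_mp)
  have part1: "(\<integral>\<omega>. var_h M h SB borel Q \<omega> \<partial>M)
           = (\<integral>\<omega>. var_h M h S borel Q \<omega> \<partial>M) + (\<integral>\<omega>. var_h M h SB borel C \<omega> \<partial>M)"
    using eq1 eq2 eq3 eqDE by simp
  have Ysimp: "AE \<omega> in M. Y \<omega> \<in> prob_simplex"
  proof (rule AE_I2)
    fix \<omega> assume "\<omega> \<in> space M"
    then obtain j where "Y \<omega> = axis j 1" using assms(4) by blast
    then show "Y \<omega> \<in> prob_simplex"
      by (simp add: prob_simplex_def axis_def)
  qed
  have Qsimp: "AE \<omega> in M. Q \<omega> \<in> prob_simplex"
    unfolding Q_def by (rule cexp_vec_simplex[OF assms(1,2) Yk_int Ysimp])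
  have Csimp: "AE \<omega> in M. C \<omega> \<in> prob_simplex"
    unfolding CQ by (rule cexp_vec_simplex[OF assms(1) Smeas Qk_int Qsimp])
  have Dsimp: "AE \<omega> in M. D \<omega> \<in> prob_simplex"
    unfolding D_def by (rule cexp_vec_simplex[OF assms(1) SBmeas Ck_int Csimp])
  define rep where "rep = (\<lambda>v. SOME \<omega>. \<omega> \<in> space M \<and> SB \<omega> = v)"
  have Dfac: "D (rep (SB \<omega>)) = D \<omega>" if w: "\<omega> \<in> space M" for \<omega>
  proof -
    have r: "rep (SB \<omega>) \<in> space M \<and> SB (rep (SB \<omega>)) = SB \<omega>"
    proof -
      have "\<exists>\<omega>'. \<omega>' \<in> space M \<and> SB \<omega>' = SB \<omega>" using w by blast
      then show ?thesis unfolding rep_def by (rule someI_ex)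
    qed
    show ?thesis
    proof (subst vec_eq_iff, intro allI)
      fix k
      have meas: "(\<lambda>\<omega>. D \<omega> $ k) \<in> borel_measurable (gen_alg M SB borel)"
        unfolding Dk FB_def[symmetric] by (rule borel_measurable_cond_exp)
      have sp: "SB \<in> space M \<rightarrow> space borel" by simp
      show "D (rep (SB \<omega>)) $ k = D \<omega> $ k"
        using factor[OF meas _ w _ sp, of "rep (SB \<omega>)"] r by blast
    qed
  qed
  define gk where "gk = (\<lambda>k \<omega>. \<phi> (D \<omega>) (axis k 1))"
  have gk_FB: "gk k \<in> borel_measurable FB" for k
  proof -
    have "(\<lambda>\<omega>. \<phi> (D (rep (SB \<omega>))) (axis k 1)) \<in> borel_measurable FB"
      unfolding FB_def by (rule fin_meas[OF finSB])
    then show ?thesis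
      by (rule measurable_cong[THEN iffD1, rotated]) (simp add: Dfac gk_def FB_def gen_alg_def)
  qed
  have gk_M: "gk k \<in> borel_measurable M" for k
    by (rule measurable_from_subalg[OF sigma_finite_subalgebra.subalg[OF subB] gk_FB])
  have gk_fin: "finite (gk k ` space M)" for k
  proof -
    have "gk k ` space M \<subseteq> (\<lambda>v. \<phi> (D (rep v)) (axis k 1)) ` SB ` space M"
    proof
      fix x assume "x \<in> gk k ` space M"
      then obtain \<omega> where w: "\<omega> \<in> space M" "x = gk k \<omega>" by blast
      then have "x = (\<lambda>v. \<phi> (D (rep v)) (axis k 1)) (SB \<omega>)" by (simp add: gk_def Dfac)
      then show "x \<in> (\<lambda>v. \<phi> (D (rep v)) (axis k 1)) ` SB ` space M" using w(1) by blast
    qed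
    then show ?thesis using finSB finite_subset by blast
  qed
  have int_gC: "integrable M (\<lambda>\<omega>. gk k \<omega> * C \<omega> $ k)" for k
  proof -
    define Bk where "Bk = (\<Sum>x\<in>gk k ` space M. \<bar>x\<bar>)"
    have bnd: "\<bar>gk k \<omega>\<bar> \<le> Bk" if "\<omega> \<in> space M" for \<omega>
      unfolding Bk_def using gk_fin[of k] that
      by (intro member_le_sum[where f = abs, of "gk k \<omega>", simplified]) auto
    have "Bk \<ge> 0" unfolding Bk_def by (intro sum_nonneg) auto
    have i1: "integrable M (\<lambda>\<omega>. Bk * C \<omega> $ k)" using Ck_int by simp
    have m1: "(\<lambda>\<omega>. gk k \<omega> * C \<omega> $ k) \<in> borel_measurable M"
      using gk_M borel_measurable_integrable[OF Ck_int] by (rule borel_measurable_times)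
    have a1: "AE \<omega> in M. norm (gk k \<omega> * C \<omega> $ k) \<le> norm (Bk * C \<omega> $ k)"
    proof (rule AE_I2)
      fix \<omega> assume "\<omega> \<in> space M"
      then have "\<bar>gk k \<omega>\<bar> * \<bar>C \<omega> $ k\<bar> \<le> Bk * \<bar>C \<omega> $ k\<bar>"
        using bnd by (intro mult_right_mono) auto
      then show "norm (gk k \<omega> * C \<omega> $ k) \<le> norm (Bk * C \<omega> $ k)"
        using \<open>Bk \<ge> 0\<close> by (simp add: abs_mult)
    qed
    show ?thesis by (rule Bochner_Integration.integrable_bound[OF i1 m1 a1])
  qed
  have intg: "integrable M (\<lambda>\<omega>. gk k \<omega> * D \<omega> $ k)"
    "(\<integral>\<omega>. gk k \<omega> * D \<omega> $ k \<partial>M) = (\<integral>\<omega>. gk k \<omega> * C \<omega> $ k \<partial>M)" for k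
    using sigma_finite_subalgebra.real_cond_exp_intg[OF subB int_gC gk_FB borel_measurable_integrable[OF Ck_int]]
    unfolding Dk[symmetric] by auto
  have hD: "h (D \<omega>) = - (\<Sum>k\<in>UNIV. gk k \<omega> * D \<omega> $ k)" for \<omega>
    by (simp add: h_def s_phi_def gk_def)
  have "(\<integral>\<omega>. h (D \<omega>) \<partial>M) = - (\<Sum>k\<in>UNIV. (\<integral>\<omega>. gk k \<omega> * D \<omega> $ k \<partial>M))"
    unfolding hD by (simp add: Bochner_Integration.integral_sum intg(1))
  also have "\<dots> = - (\<Sum>k\<in>UNIV. (\<integral>\<omega>. gk k \<omega> * C \<omega> $ k \<partial>M))"
    by (simp add: intg(2))
  also have "\<dots> = (\<integral>\<omega>. - (\<Sum>k\<in>UNIV. gk k \<omega> * C \<omega> $ k) \<partial>M)"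
    by (simp add: Bochner_Integration.integral_sum int_gC)
  finally have hDeq: "(\<integral>\<omega>. h (D \<omega>) \<partial>M) = (\<integral>\<omega>. - (\<Sum>k\<in>UNIV. gk k \<omega> * C \<omega> $ k) \<partial>M)" .
  have part2: "(\<integral>\<omega>. var_h M h SB borel C \<omega> \<partial>M) \<ge> 0" if pr: "proper_scoring \<phi>"
  proof -
    have "(\<integral>\<omega>. - (\<Sum>k\<in>UNIV. gk k \<omega> * C \<omega> $ k) \<partial>M) \<le> (\<integral>\<omega>. h (C \<omega>) \<partial>M)"
    proof (rule integral_mono_AE)
      show "integrable M (\<lambda>\<omega>. - (\<Sum>k\<in>UNIV. gk k \<omega> * C \<omega> $ k))"
        using int_gC by auto
      show "integrable M (\<lambda>\<omega>. h (C \<omega>))" by (rule intC)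
      show "AE \<omega> in M. - (\<Sum>k\<in>UNIV. gk k \<omega> * C \<omega> $ k) \<le> h (C \<omega>)"
        using Csimp Dsimp
      proof eventually_elim
        case (elim \<omega>)
        then have "d_phi \<phi> (D \<omega>) (C \<omega>) \<ge> 0" using pr unfolding proper_scoring_def by blast
        then show ?case by (simp add: d_phi_def h_def s_phi_def gk_def)
      qed
    qed
    then show ?thesis using eq3 hDeq by simp
  qed
  show ?thesis using part1 part2 by blast
qed

end
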